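(* For any constants $\beta_1, \beta_2 \in [0,1)$ with $\beta_1 < \sqrt{\beta_2}$, there exists a one-dimensional stochastic convex optimization problem — a compact convex set $\mathcal{F} \subset \mathbb{R}$ and a distribution over convex (linear) functions $f$ on $\mathcal{F}$ with bounded gradients, with expected objective $F(x) = \mathbb{E}[f(x)]$ having minimizer $x^*$ over $\mathcal{F}$ — such that, for every initial step size $\alpha > 0$, \textsc{Adam} run with parameters $\alpha, \beta_1, \beta_2$ on i.i.d. samples $f_1, f_2, \dots$ from this distribution does not converge to the optimal solution $x^*$.
   Context: \textsc{Adam} (without debiasing) on a closed convex set $\mathcal{F} \subset \mathbb{R}^d$ with loss functions $f_1, f_2, \dots$, initial point $x_1 \in \mathcal{F}$, initial step size $\alpha > 0$ and constants $\beta_1, \beta_2 \in [0,1)$ is defined as follows. Set $m_0 = v_0 = 0 \in \mathbb{R}^d$. For $t = 1, 2, \dots$: $g_t = \nabla f_t(x_t)$; $m_t = \beta_1 m_{t-1} + (1-\beta_1) g_t$; $v_t = \beta_2 v_{t-1} + (1-\beta_2) g_t^2$ (square taken coordinatewise); $V_t = \mathrm{diag}(v_t)$; $\alpha_t = \alpha/\sqrt{t}$; $\hat{x}_{t+1} = x_t - \alpha_t V_t^{-1/2} m_t$; $x_{t+1} = \Pi_{\mathcal{F}, \sqrt{V_t}}(\hat{x}_{t+1})$, where for a positive definite matrix $M$, $\Pi_{\mathcal{F}, M}(y) = \arg\min_{x \in \mathcal{F}} \|M^{1/2}(x-y)\|$. *)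

theory Defs
  imports "HOL-Probability.Probability"
begin

text \<open>Weighted projection onto a set F of the real line with respect to a (1x1) positive
  definite matrix M:  Pi_{F,M}(y) = argmin over x in F of |M^(1/2) (x - y)|.\<close>
definition wproj :: "real set \<Rightarrow> real \<Rightarrow> real \<Rightarrow> real" where
  "wproj F M y = (SOME x. x \<in> F \<and> (\<forall>z\<in>F. \<bar>sqrt M * (x - y)\<bar> \<le> \<bar>sqrt M * (z - y)\<bar>))"

text \<open>One-dimensional Adam without debiasing.  f t is the loss function at step t (t \<ge> 1).
  adam F x1 \<alpha> b1 b2 f n = (x_{n+1}, m_n, v_n); in particular adam ... 0 = (x_1, 0, 0).\<close>
primrec adam :: "real set \<Rightarrow> real \<Rightarrow> real \<Rightarrow> real \<Rightarrow> real \<Rightarrow> (nat \<Rightarrow> real \<Rightarrow> real)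
                   \<Rightarrow> nat \<Rightarrow> real \<times> real \<times> real" where
  "adam F x1 \<alpha> b1 b2 f 0 = (x1, 0, 0)"
| "adam F x1 \<alpha> b1 b2 f (Suc n) =
     (let (x, m, v) = adam F x1 \<alpha> b1 b2 f n;
          t = Suc n;
          g = deriv (f t) x;
          m' = b1 * m + (1 - b1) * g;
          v' = b2 * v + (1 - b2) * g\<^sup>2;
          \<alpha>t = \<alpha> / sqrt (real t);
          xh = x - \<alpha>t * m' / sqrt v'
      in (wproj F (sqrt v') xh, m', v'))"

definition adam_iter :: "real set \<Rightarrow> real \<Rightarrow> real \<Rightarrow> real \<Rightarrow> real \<Rightarrow> (nat \<Rightarrow> real \<Rightarrow> real)
                   \<Rightarrow> nat \<Rightarrow> real" where
  "adam_iter F x1 \<alpha> b1 b2 f t = fst (adam F x1 \<alpha> b1 b2 f (t - 1))"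

end

theory Submission
  imports Defs
begin


primrec mm :: "real \<Rightarrow> real stream \<Rightarrow> nat \<Rightarrow> real" where
  "mm b \<omega> 0 = 0" | "mm b \<omega> (Suc n) = b * mm b \<omega> n + (1 - b) * (\<omega> !! n)"
primrec vv :: "real \<Rightarrow> real stream \<Rightarrow> nat \<Rightarrow> real" where
  "vv b \<omega> 0 = 0" | "vv b \<omega> (Suc n) = b * vv b \<omega> n + (1 - b) * (\<omega> !! n)\<^sup>2"

lemma adam_snd:
  "snd (adam F x1 \<alpha> b1 b2 (\<lambda>t x. (\<omega> !! (t - 1)) * x) n) = (mm b1 \<omega> n, vv b2 \<omega> n)"
proof (induction n)
  case 0 then show ?case by simp
next
  case (Suc n)
  obtain x m v where e: "adam F x1 \<alpha> b1 b2 (\<lambda>t x. (\<omega> !! (t - 1)) * x) n = (x, m, v)"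
    by (metis prod_cases3)
  with Suc show ?case by (simp add: Let_def)
qed

lemma adam_fst:
  "fst (adam F x1 \<alpha> b1 b2 (\<lambda>t x. (\<omega> !! (t - 1)) * x) (Suc n)) =
    wproj F (sqrt (vv b2 \<omega> (Suc n)))
      (fst (adam F x1 \<alpha> b1 b2 (\<lambda>t x. (\<omega> !! (t - 1)) * x) n)
        - \<alpha> / sqrt (real (Suc n)) * mm b1 \<omega> (Suc n) / sqrt (vv b2 \<omega> (Suc n)))"
proof -
  obtain x m v where e: "adam F x1 \<alpha> b1 b2 (\<lambda>t x. (\<omega> !! (t - 1)) * x) n = (x, m, v)"
    by (metis prod_cases3)
  have "(m, v) = (mm b1 \<omega> n, vv b2 \<omega> n)" using adam_snd[of F x1 \<alpha> b1 b2 \<omega> n] e by simp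
  then show ?thesis using e by (simp add: Let_def)
qed

lemma wproj_ge:
  assumes "M > 0"
  shows "wproj {0..1} M y \<in> {0..1} \<and> min 1 y \<le> wproj {0..1} M y"
proof -
  define z where "z = max 0 (min 1 y)"
  let ?P = "\<lambda>x. x \<in> {0..(1::real)} \<and> (\<forall>w\<in>{0..1}. \<bar>sqrt M * (x - y)\<bar> \<le> \<bar>sqrt M * (w - y)\<bar>)"
  have "?P z"
  proof -
    have "\<bar>z - y\<bar> \<le> \<bar>w - y\<bar>" if "w \<in> {0..1}" for w using that by (auto simp: z_def)
    then show ?thesis using assms by (auto simp: z_def abs_mult intro: mult_left_mono)
  qed
  then have P: "?P (wproj {0..1} M y)" unfolding wproj_def by (rule someI)
  then have "\<bar>sqrt M * (wproj {0..1} M y - y)\<bar> \<le> \<bar>sqrt M * (z - y)\<bar>"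
    using \<open>?P z\<close> by blast
  then have "\<bar>wproj {0..1} M y - y\<bar> \<le> \<bar>z - y\<bar>" using assms by (simp add: abs_mult)
  then show ?thesis using P by (auto simp: z_def split: if_splits)
qed



lemma run_lemma:
  assumes "\<And>j. j < k \<Longrightarrow> \<omega> !! (n + j) = -1"
  shows "mm b1 \<omega> (n + k) = b1 ^ k * mm b1 \<omega> n - (1 - b1 ^ k) \<and>
         vv b2 \<omega> (n + k) = b2 ^ k * vv b2 \<omega> n + (1 - b2 ^ k)"
  using assms
proof (induction k)
  case 0 then show ?case by simp
next
  case (Suc k)
  then have IH: "mm b1 \<omega> (n + k) = b1 ^ k * mm b1 \<omega> n - (1 - b1 ^ k)"
    "vv b2 \<omega> (n + k) = b2 ^ k * vv b2 \<omega> n + (1 - b2 ^ k)" by auto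
  have w: "\<omega> !! (n + k) = -1" using Suc.prems by simp
  show ?case by (simp only: add_Suc_right mm.simps vv.simps IH w power_Suc) (simp add: algebra_simps)
qed

lemma vv_nonneg:
  assumes "0 \<le> b" "b < 1"
  shows "0 \<le> vv b \<omega> n"
  by (induction n) (use assms in simp_all)

lemma vv_bound:
  assumes "0 \<le> b" "b < 1" "\<And>i. \<bar>\<omega> !! i\<bar> \<le> C"
  shows "vv b \<omega> n \<le> C\<^sup>2"
proof (induction n)
  case 0 then show ?case by simp
next
  case (Suc n)
  have "\<bar>\<omega> !! n\<bar>\<^sup>2 \<le> C\<^sup>2" using assms(3)[of n]
    by (intro power_mono) auto
  then have "(\<omega> !! n)\<^sup>2 \<le> C\<^sup>2" by simp
  then have "b * vv b \<omega> n + (1 - b) * (\<omega> !! n)\<^sup>2 \<le> b * C\<^sup>2 + (1 - b) * C\<^sup>2"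
    using Suc assms by (intro add_mono mult_left_mono) auto
  then show ?case by (simp add: algebra_simps)
qed
lemma tri: "0 \<le> (b::real) \<Longrightarrow> b \<le> 1 \<Longrightarrow> \<bar>b * x + (1 - b) * y\<bar> \<le> b * \<bar>x\<bar> + (1 - b) * \<bar>y\<bar>"
  using abs_triangle_ineq[of "b*x" "(1-b)*y"] by (simp add: abs_mult)

lemma mm_bound:
  assumes "0 \<le> b" "b < 1" "\<And>i. \<bar>\<omega> !! i\<bar> \<le> C"
  shows "\<bar>mm b \<omega> n\<bar> \<le> C"
proof (induction n)
  case 0 then show ?case using assms(3)[of 0] by simp
next
  case (Suc n)
  have "\<bar>mm b \<omega> (Suc n)\<bar> \<le> b * \<bar>mm b \<omega> n\<bar> + (1 - b) * \<bar>\<omega> !! n\<bar>"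
    unfolding mm.simps by (rule tri) (use assms in auto)
  also have "\<dots> \<le> b * C + (1 - b) * C"
    using Suc assms by (intro add_mono mult_left_mono) auto
  finally show ?case by (simp add: algebra_simps)
qed

lemma vv_pos:
  assumes "0 \<le> b" "b < 1" "\<And>i. 1 \<le> \<bar>\<omega> !! i\<bar>"
  shows "1 - b \<le> vv b \<omega> (Suc n)"
proof -
  have "0 \<le> vv b \<omega> n" using vv_nonneg assms by blast
  have "1 \<le> \<bar>\<omega> !! n\<bar>\<^sup>2" using assms(3)[of n] by (intro one_le_power)
  then have "1 \<le> (\<omega> !! n)\<^sup>2" by simp
  then have "(1 - b) * 1 \<le> (1 - b) * (\<omega> !! n)\<^sup>2" using assms by (intro mult_left_mono) auto
  moreover have "0 \<le> b * vv b \<omega> n" using \<open>0 \<le> vv b \<omega> n\<close> assms by simp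
  ultimately show ?thesis by simp
qed

lemma ratio_bound:
  assumes b1: "0 \<le> b1" "b1 < 1" and b2: "0 < b2" "b2 < 1" and "b1 < sqrt b2"
  defines "K0 \<equiv> ((1 - b1) / sqrt (1 - b2)) / (1 - b1 / sqrt b2)"
  shows "\<bar>mm b1 \<omega> n\<bar> \<le> K0 * sqrt (vv b2 \<omega> n)"
proof (induction n)
  case 0 then show ?case by simp
next
  case (Suc n)
  define s where "s = sqrt b2"
  define c0 where "c0 = (1 - b1) / sqrt (1 - b2)"
  define \<rho> where "\<rho> = b1 / s"
  have s: "0 < s" using b2 by (simp add: s_def)
  have \<rho>: "0 \<le> \<rho>" "\<rho> < 1" using assms s by (auto simp: \<rho>_def s_def)
  have c0: "0 \<le> c0" using b1 b2 by (simp add: c0_def)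
  have K0: "K0 = c0 / (1 - \<rho>)" by (simp add: K0_def c0_def \<rho>_def s_def)
  have K0n: "0 \<le> K0" using K0 c0 \<rho> by simp
  have K0e: "\<rho> * K0 + c0 = K0" using K0 \<rho> by (simp add: field_simps)
  define g where "g = \<omega> !! n"
  define V where "V = vv b2 \<omega> (Suc n)"
  have Vdef: "V = b2 * vv b2 \<omega> n + (1 - b2) * g\<^sup>2" by (simp add: V_def g_def)
  have vn: "0 \<le> vv b2 \<omega> n" using vv_nonneg b2 by simp
  have V1: "s * sqrt (vv b2 \<omega> n) \<le> sqrt V"
  proof -
    have "b2 * vv b2 \<omega> n \<le> V" using Vdef b2 by simp
    then have "sqrt (b2 * vv b2 \<omega> n) \<le> sqrt V" by (rule real_sqrt_le_mono)
    then show ?thesis by (simp add: s_def real_sqrt_mult)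
  qed
  have V2: "sqrt (1 - b2) * \<bar>g\<bar> \<le> sqrt V"
  proof -
    have "(1 - b2) * g\<^sup>2 \<le> V" using Vdef b2 vn by simp
    then have "sqrt ((1 - b2) * g\<^sup>2) \<le> sqrt V" by (rule real_sqrt_le_mono)
    then show ?thesis by (simp add: real_sqrt_mult)
  qed
  have "\<bar>mm b1 \<omega> (Suc n)\<bar> \<le> b1 * \<bar>mm b1 \<omega> n\<bar> + (1 - b1) * \<bar>g\<bar>"
    unfolding g_def mm.simps by (rule tri) (use b1 in auto)
  also have "\<dots> \<le> b1 * (K0 * sqrt (vv b2 \<omega> n)) + (1 - b1) * \<bar>g\<bar>"
    using Suc b1 by (intro add_mono mult_left_mono) auto
  also have "b1 * (K0 * sqrt (vv b2 \<omega> n)) = \<rho> * K0 * (s * sqrt (vv b2 \<omega> n))"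
    using s by (simp add: \<rho>_def)
  also have "\<dots> \<le> \<rho> * K0 * sqrt V"
    using V1 \<rho> K0n by (intro mult_left_mono) auto
  also have "(1 - b1) * \<bar>g\<bar> = c0 * (sqrt (1 - b2) * \<bar>g\<bar>)"
    using b2 by (simp add: c0_def)
  also have "\<dots> \<le> c0 * sqrt V" using V2 c0 by (intro mult_left_mono) auto
  also have "\<rho> * K0 * sqrt V + c0 * sqrt V = K0 * sqrt V" by (metis K0e distrib_right)
  finally show ?case by (simp add: V_def)
qed



definition rr :: "real \<Rightarrow> real \<Rightarrow> real stream \<Rightarrow> nat \<Rightarrow> real" where
  "rr b1 b2 \<omega> k = mm b1 \<omega> (Suc k) / sqrt (vv b2 \<omega> (Suc k))"

definition RR :: "nat \<Rightarrow> real \<Rightarrow> real stream \<Rightarrow> nat \<Rightarrow> bool" where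
  "RR L C \<omega> k = (k + 1 < L \<or> (\<exists>j<L. j \<le> k \<and> \<omega> !! (k - j) = C))"

lemma rr_neg:
  assumes b1: "0 \<le> b1" "b1 < 1" and b2: "0 < b2" "b2 < 1"
    and C: "1 \<le> C" and vals: "\<And>i. \<omega> !! i \<in> {C, -1}"
    and h1: "b1 ^ L * C \<le> 1/4" and h2: "b1 ^ L \<le> 1/4" and h3: "b2 ^ L * C\<^sup>2 \<le> 1"
    and nR: "\<not> RR L C \<omega> k"
  shows "rr b1 b2 \<omega> k \<le> -1/3"
proof -
  have kL: "L \<le> k + 1" using nR unfolding RR_def by simp
  have allm: "\<omega> !! (k - j) = -1" if j: "j < L" for j
  proof -
    have "j \<le> k" using j kL by simp
    then have "\<omega> !! (k - j) \<noteq> C" using nR j unfolding RR_def by blast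
    then show ?thesis using vals[of "k - j"] by simp
  qed
  define n where "n = Suc k - L"
  have nL: "n + L = Suc k" using kL by (simp add: n_def)
  have "\<And>j. j < L \<Longrightarrow> \<omega> !! (n + j) = -1"
  proof -
    fix j assume j: "j < L"
    have "n + j = k - (L - 1 - j)" using kL j by (simp add: n_def)
    then show "\<omega> !! (n + j) = -1" using allm[of "L - 1 - j"] j by simp
  qed
  from run_lemma[of L \<omega> n b1 b2, OF this] nL
  have m: "mm b1 \<omega> (Suc k) = b1 ^ L * mm b1 \<omega> n - (1 - b1 ^ L)"
   and v: "vv b2 \<omega> (Suc k) = b2 ^ L * vv b2 \<omega> n + (1 - b2 ^ L)" by auto
  have absC: "\<bar>\<omega> !! i\<bar> \<le> C" for i
  proof -
    have "\<omega> !! i = C \<or> \<omega> !! i = -1" using vals[of i] by simp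
    then show ?thesis using C by auto
  qed
  have "\<bar>mm b1 \<omega> n\<bar> \<le> C" using mm_bound[OF b1 absC] .
  then have "b1 ^ L * mm b1 \<omega> n \<le> b1 ^ L * C"
    using b1 by (intro mult_left_mono) auto
  then have mle: "mm b1 \<omega> (Suc k) \<le> -1/2" using m h1 h2 by linarith
  have "vv b2 \<omega> n \<le> C\<^sup>2" using vv_bound[of b2 \<omega> C] b2 absC by auto
  then have "b2 ^ L * vv b2 \<omega> n \<le> b2 ^ L * C\<^sup>2" using b2 by (intro mult_left_mono) auto
  moreover have "0 \<le> b2 ^ L" using b2 by simp
  ultimately have vle: "vv b2 \<omega> (Suc k) \<le> 2" using v h3 by linarith
  have one: "1 \<le> \<bar>\<omega> !! i\<bar>" for i
  proof -
    have "\<omega> !! i = C \<or> \<omega> !! i = -1" using vals[of i] by simp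
    then show ?thesis using C by auto
  qed
  have "1 - b2 \<le> vv b2 \<omega> (Suc k)" using b2 one by (intro vv_pos) auto
  then have vpos: "0 < vv b2 \<omega> (Suc k)" using b2 by linarith
  have "sqrt (vv b2 \<omega> (Suc k)) \<le> sqrt 2" using vle by simp
  also have "sqrt 2 \<le> 3/2" by (rule real_le_lsqrt) (auto simp: power2_eq_square)
  finally have sq: "sqrt (vv b2 \<omega> (Suc k)) \<le> 3/2" .
  have sp: "0 < sqrt (vv b2 \<omega> (Suc k))" using vpos by simp
  have "mm b1 \<omega> (Suc k) \<le> -1/3 * sqrt (vv b2 \<omega> (Suc k))" using mle sq by linarith
  then show ?thesis unfolding rr_def using sp by (simp add: pos_divide_le_eq)
qed

lemma rr_abs:
  assumes b1: "0 \<le> b1" "b1 < 1" and b2: "0 < b2" "b2 < 1" and "b1 < sqrt b2"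
    and one: "\<And>i. 1 \<le> \<bar>\<omega> !! i\<bar>"
  shows "\<bar>rr b1 b2 \<omega> k\<bar> \<le> ((1 - b1) / sqrt (1 - b2)) / (1 - b1 / sqrt b2)"
proof -
  have "1 - b2 \<le> vv b2 \<omega> (Suc k)" using b2 one by (intro vv_pos) auto
  then have vpos: "0 < vv b2 \<omega> (Suc k)" using b2 by linarith
  have sp: "0 < sqrt (vv b2 \<omega> (Suc k))" using vpos by simp
  show ?thesis unfolding rr_def using ratio_bound[OF assms(1-5), of \<omega> "Suc k"] sp
    by (simp add: abs_div pos_divide_le_eq)
qed



lemma conv_consequence:
  assumes b1: "0 \<le> b1" "b1 < 1" and b2: "0 < b2" "b2 < 1" and b12: "b1 < sqrt b2"
    and C: "1 \<le> C" and vals: "\<And>i. \<omega> !! i \<in> {C, -1}"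
    and h1: "b1 ^ L * C \<le> 1/4" and h2: "b1 ^ L \<le> 1/4" and h3: "b2 ^ L * C\<^sup>2 \<le> 1"
    and \<alpha>: "0 < \<alpha>" and x1: "x1 \<in> {0..1}"
    and conv: "(\<lambda>t. adam_iter {0..1} x1 \<alpha> b1 b2 (\<lambda>t x. (\<omega> !! (t - 1)) * x) (Suc t)) \<longlonglongrightarrow> 0"
  defines "K5 \<equiv> ((1 - b1) / sqrt (1 - b2)) / (1 - b1 / sqrt b2) + 1/3"
  shows "\<exists>M::nat. \<forall>n. (\<Sum>k<n. (1/3 - K5 * (if RR L C \<omega> k then 1 else 0)) / sqrt (real (Suc k))) \<le> real M"
proof -
  define X where "X n = fst (adam {0..1} x1 \<alpha> b1 b2 (\<lambda>t x. (\<omega> !! (t - 1)) * x) n)" for n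
  define K0 where "K0 = ((1 - b1) / sqrt (1 - b2)) / (1 - b1 / sqrt b2)"
  have K5: "K5 = K0 + 1/3" by (simp add: K5_def K0_def)
  have one: "1 \<le> \<bar>\<omega> !! i\<bar>" for i
  proof -
    have "\<omega> !! i = C \<or> \<omega> !! i = -1" using vals[of i] by simp
    then show ?thesis using C by auto
  qed
  have Xconv: "X \<longlonglongrightarrow> 0" using conv unfolding X_def[abs_def] by (simp add: adam_iter_def)
  have Xstep: "X (Suc n) \<in> {0..1} \<and> min 1 (X n - \<alpha> / sqrt (real (Suc n)) * rr b1 b2 \<omega> n) \<le> X (Suc n)" for n
  proof -
    have "1 - b2 \<le> vv b2 \<omega> (Suc n)" using b2 one by (intro vv_pos) auto
    then have vpos: "0 < sqrt (vv b2 \<omega> (Suc n))" using b2 by simp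
    show ?thesis unfolding X_def adam_fst rr_def using wproj_ge[OF vpos] by simp
  qed
  obtain N where N: "\<And>n. n \<ge> N \<Longrightarrow> X n < 1"
    using order_tendstoD(2)[OF Xconv, of 1] by (auto simp: eventually_sequentially)
  have stp: "X n - \<alpha> / sqrt (real (Suc n)) * rr b1 b2 \<omega> n \<le> X (Suc n)" if "n \<ge> N" for n
    using Xstep[of n] N[of "Suc n"] that by (auto simp: min_def split: if_splits)
  have tele: "X N - (\<Sum>k\<in>{N..<n}. \<alpha> / sqrt (real (Suc k)) * rr b1 b2 \<omega> k) \<le> X n" if "N \<le> n" for n
    using that
  proof (induction n rule: dec_induct)
    case base then show ?case by simp
  next
    case (step n)
    then show ?case using stp[of n] \<open>N \<le> n\<close> by simp
  qed
  have X01: "X n \<in> {0..1}" for n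
    by (cases n) (use x1 Xstep in \<open>auto simp: X_def\<close>)
  define T where "T k = - rr b1 b2 \<omega> k / sqrt (real (Suc k))" for k
  have tail: "(\<Sum>k\<in>{N..<n}. T k) \<le> 1 / \<alpha>" if "N \<le> n" for n
  proof -
    have "(\<Sum>k\<in>{N..<n}. \<alpha> / sqrt (real (Suc k)) * rr b1 b2 \<omega> k) = - \<alpha> * (\<Sum>k\<in>{N..<n}. T k)"
      by (simp add: T_def sum_distrib_left sum_negf)
    then have "\<alpha> * (\<Sum>k\<in>{N..<n}. T k) \<le> X n - X N" using tele[OF that] by simp
    also have "\<dots> \<le> 1" using X01[of n] X01[of N] by auto
    finally show ?thesis using \<alpha> by (simp add: field_simps)
  qed
  define M0 where "M0 = 1 / \<alpha> + (\<Sum>k<N. \<bar>T k\<bar>)"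
  have allb: "(\<Sum>k<n. T k) \<le> M0" for n
  proof (cases "N \<le> n")
    case True
    have "{..<n} = {..<N} \<union> {N..<n}" using True by auto
    then have "(\<Sum>k<n. T k) = (\<Sum>k<N. T k) + (\<Sum>k\<in>{N..<n}. T k)"
      by (simp add: sum.union_disjoint ivl_disj_int)
    also have "\<dots> \<le> (\<Sum>k<N. \<bar>T k\<bar>) + 1 / \<alpha>"
      using tail[OF True] by (intro add_mono sum_mono) auto
    finally show ?thesis by (simp add: M0_def)
  next
    case False
    have "(\<Sum>k<n. T k) \<le> (\<Sum>k<n. \<bar>T k\<bar>)" by (intro sum_mono) auto
    also have "\<dots> \<le> (\<Sum>k<N. \<bar>T k\<bar>)" using False by (intro sum_mono2) auto
    finally show ?thesis using \<alpha> by (simp add: M0_def) (smt (verit) divide_pos_pos)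
  qed
  have lb: "(1/3 - K5 * (if RR L C \<omega> k then 1 else 0)) / sqrt (real (Suc k)) \<le> T k" for k
  proof -
    have "1/3 - K5 * (if RR L C \<omega> k then 1 else 0) \<le> - rr b1 b2 \<omega> k"
    proof (cases "RR L C \<omega> k")
      case True
      then show ?thesis using rr_abs[OF b1 b2 b12 one, of k] by (simp add: K5 K0_def)
    next
      case False
      then show ?thesis using rr_neg[OF b1 b2 C vals h1 h2 h3 False] by simp
    qed
    then show ?thesis unfolding T_def by (intro divide_right_mono) auto
  qed
  show ?thesis
  proof (intro exI allI)
    fix n
    have "(\<Sum>k<n. (1/3 - K5 * (if RR L C \<omega> k then 1 else 0)) / sqrt (real (Suc k))) \<le> (\<Sum>k<n. T k)"
      by (intro sum_mono lb)
    also have "\<dots> \<le> M0" by (rule allb)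
    also have "\<dots> \<le> real (nat \<lceil>M0\<rceil>)" by linarith
    finally show "(\<Sum>k<n. (1/3 - K5 * (if RR L C \<omega> k then 1 else 0)) / sqrt (real (Suc k))) \<le> real (nat \<lceil>M0\<rceil>)" .
  qed
qed



lemma distr_snth:
  "distr (stream_space (measure_pmf D)) (measure_pmf D) (\<lambda>\<omega>. \<omega> !! i) = measure_pmf D"
proof -
  interpret product_prob_space "\<lambda>_. measure_pmf D" UNIV ..
  have "distr (stream_space (measure_pmf D)) (measure_pmf D) (\<lambda>\<omega>. \<omega> !! i)
      = distr (distr (\<Pi>\<^sub>M i\<in>UNIV. measure_pmf D) (stream_space (measure_pmf D)) to_stream) (measure_pmf D) (\<lambda>\<omega>. \<omega> !! i)"
    by (subst stream_space_eq_distr) (rule refl)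
  also have "\<dots> = distr (\<Pi>\<^sub>M i\<in>UNIV. measure_pmf D) (measure_pmf D) (\<lambda>X. to_stream X !! i)"
    by (subst distr_distr) (auto simp: comp_def)
  also have "\<dots> = distr (\<Pi>\<^sub>M i\<in>UNIV. measure_pmf D) (measure_pmf D) (\<lambda>X. X i)"
    by (simp add: to_stream_def)
  also have "\<dots> = measure_pmf D"
    by (rule distr_PiM_component) (auto intro: measure_pmf.prob_space_axioms)
  finally show ?thesis .
qed

lemma prob_snth:
  "measure (stream_space (measure_pmf D)) {\<omega>. \<omega> !! i \<in> A} = measure_pmf.prob D A"
proof -
  have "measure_pmf.prob D A = measure (distr (stream_space (measure_pmf D)) (measure_pmf D) (\<lambda>\<omega>. \<omega> !! i)) A"
    by (simp add: distr_snth)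
  also have "\<dots> = measure (stream_space (measure_pmf D)) ((\<lambda>\<omega>. \<omega> !! i) -` A \<inter> space (stream_space (measure_pmf D)))"
    by (rule measure_distr) auto
  finally show ?thesis by (simp add: space_stream_space vimage_def)
qed



lemma min_count: "(\<Sum>k<n. if k < L then 1 else 0 :: real) = real (min n L)"
  by (induction n) (auto simp: min_def)

lemma H_ge: "sqrt (real n) \<le> (\<Sum>k<n. 1 / sqrt (real (Suc k)))"
proof -
  have "(\<Sum>k<n. 1 / sqrt (real n)) \<le> (\<Sum>k<n. 1 / sqrt (real (Suc k)))"
    by (intro sum_mono divide_left_mono) auto
  moreover have "(\<Sum>k<n. 1 / sqrt (real n)) = sqrt (real n)"
    by (cases "n = 0") (auto simp: field_simps)
  ultimately show ?thesis by simp
qed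

lemma prob_part:
  fixes D :: "real pmf" and C p K5 :: real and L :: nat
  assumes pC: "measure_pmf.prob D {C} \<le> p" and p: "0 \<le> p" and K5: "0 < K5"
    and small: "K5 * real L * p \<le> 1/12"
  defines "S \<equiv> stream_space (measure_pmf D)"
  defines "G \<equiv> \<lambda>n \<omega>. (\<Sum>k<n. (1/3 - K5 * (if RR L C \<omega> k then 1 else 0)) / sqrt (real (Suc k)))"
  shows "{\<omega>. \<exists>M::nat. \<forall>n. G n \<omega> \<le> real M} \<in> sets S"
    and "measure S {\<omega>. \<exists>M::nat. \<forall>n. G n \<omega> \<le> real M} < 1"
proof -
  interpret S: prob_space S unfolding S_def by (rule prob_space.prob_space_stream_space[OF measure_pmf.prob_space_axioms])
  have spS: "space S = UNIV" by (simp add: S_def space_stream_space)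
  define A where "A k = {\<omega>. RR L C \<omega> k}" for k
  have Ci: "{\<omega>. \<omega> !! i = C} \<in> sets S" for i
  proof -
    have "(\<lambda>\<omega>. \<omega> !! i) -` {C} \<inter> space S \<in> sets S"
      unfolding S_def by (rule measurable_sets[OF measurable_snth]) auto
    then show ?thesis by (simp add: spS vimage_def)
  qed
  have Aeq: "A k = (if k + 1 < L then UNIV else (\<Union>j\<in>{j. j < L \<and> j \<le> k}. {\<omega>. \<omega> !! (k - j) = C}))" for k
    by (auto simp: A_def RR_def)
  have Asets[measurable]: "A k \<in> sets S" for k
    unfolding Aeq using Ci by (auto simp flip: spS)
  have Aprob: "S.prob (A k) \<le> (if k < L then 1 else real L * p)" for k
  proof (cases "k + 1 < L")
    case True then show ?thesis by simp
  next
    case False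
    have "S.prob (A k) \<le> (\<Sum>j\<in>{j. j < L \<and> j \<le> k}. S.prob {\<omega>. \<omega> !! (k - j) = C})"
      unfolding Aeq using False Ci by (auto intro!: measure_UNION_le)
    also have "\<dots> \<le> (\<Sum>j\<in>{j. j < L \<and> j \<le> k}. p)"
    proof (intro sum_mono)
      fix j
      have "S.prob {\<omega>. \<omega> !! (k - j) = C} = S.prob {\<omega>. \<omega> !! (k - j) \<in> {C}}" by simp
      also have "\<dots> = measure_pmf.prob D {C}" unfolding S_def by (rule prob_snth)
      finally show "S.prob {\<omega>. \<omega> !! (k - j) = C} \<le> p" using pC by simp
    qed
    also have "\<dots> \<le> real L * p"
    proof -
      have "card {j. j < L \<and> j \<le> k} \<le> L"
        by (rule order_trans[OF card_mono[of "{..<L}"]]) auto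
      then show ?thesis using p by (simp add: mult_right_mono)
    qed
    finally show ?thesis using False by simp
  qed
  define Q where "Q n \<omega> = (\<Sum>k<n. indicator (A k) \<omega> / sqrt (real (Suc k)))" for n \<omega>
  define H where "H n = (\<Sum>k<n. 1 / sqrt (real (Suc k)))" for n
  have GQ: "G n \<omega> = H n / 3 - K5 * Q n \<omega>" for n \<omega>
  proof -
    have "H n / 3 - K5 * Q n \<omega> = (\<Sum>k<n. 1 / sqrt (real (Suc k)) / 3 - K5 * (indicator (A k) \<omega> / sqrt (real (Suc k))))"
      by (simp add: H_def Q_def sum_subtractf sum_divide_distrib sum_distrib_left)
    also have "\<dots> = G n \<omega>" unfolding G_def
    proof (intro sum.cong refl)
      fix k
      show "1 / sqrt (real (Suc k)) / 3 - K5 * (indicator (A k) \<omega> / sqrt (real (Suc k))) =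
        (1/3 - K5 * (if RR L C \<omega> k then 1 else 0)) / sqrt (real (Suc k))"
        by (simp add: A_def indicator_def diff_divide_distrib)
    qed
    finally show ?thesis by simp
  qed
  have Qmeas[measurable]: "Q n \<in> borel_measurable S" for n
    unfolding Q_def by measurable
  have Qint: "integrable S (Q n)" for n
    unfolding Q_def by (auto intro!: integrable_sum integrable_divide integrable_real_indicator simp: S.emeasure_eq_measure)
  have EQ: "(\<integral>\<omega>. Q n \<omega> \<partial>S) \<le> real L + real L * p * H n" for n
  proof -
    have "(\<integral>\<omega>. Q n \<omega> \<partial>S) = (\<Sum>k<n. S.prob (A k) / sqrt (real (Suc k)))"
      unfolding Q_def by (subst Bochner_Integration.integral_sum) (auto simp: spS S.emeasure_eq_measure)
    also have "\<dots> \<le> (\<Sum>k<n. (if k < L then 1 else 0) + real L * p * (1 / sqrt (real (Suc k))))"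
    proof (intro sum_mono)
      fix k
      have w: "0 < sqrt (real (Suc k))" "1 / sqrt (real (Suc k)) \<le> 1" by auto
      show "S.prob (A k) / sqrt (real (Suc k)) \<le> (if k < L then 1 else 0) + real L * p * (1 / sqrt (real (Suc k)))"
      proof (cases "k < L")
        case True
        have "S.prob (A k) / sqrt (real (Suc k)) \<le> 1 / sqrt (real (Suc k))"
          using w by (intro divide_right_mono) auto
        also have "\<dots> \<le> 1" using w by simp
        finally have "S.prob (A k) / sqrt (real (Suc k)) \<le> 1" .
        moreover have "0 \<le> real L * p * (1 / sqrt (real (Suc k)))" using p by simp
        ultimately show ?thesis unfolding if_P[OF True] by linarith
      next
        case False
        then show ?thesis using Aprob[of k] w by (simp add: divide_right_mono)
      qed
    qed
    also have "\<dots> = real (min n L) + real L * p * H n"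
      by (simp add: sum.distrib min_count H_def sum_distrib_left)
    also have "\<dots> \<le> real L + real L * p * H n" by simp
    finally show ?thesis .
  qed
  define BM where "BM M = {\<omega>. \<forall>n. G n \<omega> \<le> real M}" for M :: nat
  have Gmeas[measurable]: "G n \<in> borel_measurable S" for n
    unfolding GQ[abs_def] by measurable
  have BMsets[measurable]: "BM M \<in> sets S" for M
  proof -
    have "BM M = (\<Inter>n. {\<omega>\<in>space S. G n \<omega> \<le> real M})" by (auto simp: BM_def spS)
    also have "\<dots> \<in> sets S" by measurable
    finally show ?thesis .
  qed
  have Beq: "{\<omega>. \<exists>M::nat. \<forall>n. G n \<omega> \<le> real M} = (\<Union>M. BM M)" by (auto simp: BM_def)
  show Bsets: "{\<omega>. \<exists>M::nat. \<forall>n. G n \<omega> \<le> real M} \<in> sets S"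
    unfolding Beq by measurable
  have BMle: "S.prob (BM M) \<le> 1/2" for M
  proof -
    define Y where "Y = 12 * K5 * real L + 6 * real M + 1"
    have Y0: "0 \<le> Y" using K5 by (simp add: Y_def)
    define n where "n = nat \<lceil>Y\<^sup>2\<rceil>"
    have "Y \<le> sqrt (real n)"
      by (rule real_le_rsqrt) (simp add: n_def)
    then have HY: "Y \<le> H n" using H_ge[of n] by (simp add: H_def)
    define a where "a = (H n / 3 - real M) / K5"
    have "0 \<le> K5 * real L" using K5 by simp
    then have "0 < H n / 3 - real M" using HY by (simp add: Y_def)
    then have a: "0 < a" using K5 by (simp add: a_def)
    have "BM M \<subseteq> {\<omega>\<in>space S. a \<le> Q n \<omega>}"
    proof
      fix \<omega> assume "\<omega> \<in> BM M"
      then have "G n \<omega> \<le> real M" by (simp add: BM_def)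
      then have "H n / 3 - real M \<le> K5 * Q n \<omega>" by (simp add: GQ)
      then show "\<omega> \<in> {\<omega>\<in>space S. a \<le> Q n \<omega>}" using K5 by (simp add: a_def spS pos_divide_le_eq mult.commute)
    qed
    then have "S.prob (BM M) \<le> S.prob {\<omega>\<in>space S. a \<le> Q n \<omega>}"
      by (intro S.finite_measure_mono) auto
    also have "\<dots> \<le> (\<integral>\<omega>. Q n \<omega> \<partial>S) / a"
      by (rule integral_Markov_inequality_measure[OF Qint, of "space S"])
         (auto simp: Q_def intro!: sum_nonneg a)
    also have "\<dots> \<le> (real L + real L * p * H n) / a"
      using EQ[of n] a by (intro divide_right_mono) auto
    also have "\<dots> \<le> 1/2"
    proof -
      have "K5 * (real L * p * H n) \<le> 1/12 * H n"
        using small HY Y0 by (metis mult.assoc mult_right_mono order.trans)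
      then have "2 * K5 * (real L + real L * p * H n) \<le> H n / 3 - real M"
        using HY by (simp add: Y_def algebra_simps)
      then show ?thesis using a K5 by (simp add: a_def field_simps)
    qed
    finally show ?thesis .
  qed
  have inc: "incseq BM" by (auto simp: incseq_def BM_def) (meson of_nat_mono order.trans)
  have "(\<lambda>M. S.prob (BM M)) \<longlonglongrightarrow> S.prob (\<Union>M. BM M)"
    by (rule S.finite_Lim_measure_incseq) (auto simp: inc)
  then have "S.prob (\<Union>M. BM M) \<le> 1/2"
    by (rule LIMSEQ_le_const2) (use BMle in blast)
  then show "measure S {\<omega>. \<exists>M::nat. \<forall>n. G n \<omega> \<le> real M} < 1" unfolding Beq by simp
qed



theorem theorem3:
  fixes \<beta>1 \<beta>2 :: real
  assumes "0 \<le> \<beta>1" "\<beta>1 < 1" "0 \<le> \<beta>2" "\<beta>2 < 1" "\<beta>1 < sqrt \<beta>2"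
  shows "\<exists>(F :: real set) (D :: real pmf) (x1 :: real) (xstar :: real).
           compact F \<and> convex F \<and> x1 \<in> F \<and>
           (\<exists>G. \<forall>c\<in>set_pmf D. \<bar>c\<bar> \<le> G) \<and>
           xstar \<in> F \<and>
           (\<forall>x\<in>F. x \<noteq> xstar \<longrightarrow>
              measure_pmf.expectation D (\<lambda>c. c * xstar) < measure_pmf.expectation D (\<lambda>c. c * x)) \<and>
           (\<forall>\<alpha>>0. \<not> (AE \<omega> in stream_space (measure_pmf D).
              (\<lambda>t. adam_iter F x1 \<alpha> \<beta>1 \<beta>2 (\<lambda>t x. (\<omega> !! (t - 1)) * x) (Suc t)) \<longlonglongrightarrow> xstar))"
proof -
  have b1: "0 \<le> \<beta>1" "\<beta>1 < 1" using assms by auto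
  have b2pos: "0 < \<beta>2" using assms by (metis le_less_trans less_eq_real_def real_sqrt_eq_zero_cancel_iff real_sqrt_ge_zero)
  have b2: "0 < \<beta>2" "\<beta>2 < 1" using assms b2pos by auto
  have b12: "\<beta>1 < sqrt \<beta>2" by fact
  define s where "s = sqrt \<beta>2"
  have s: "0 < s" "s < 1" using b2 by (auto simp: s_def)
  have s2: "\<beta>2 = s\<^sup>2" using b2 by (simp add: s_def)
  define K0 where "K0 = ((1 - \<beta>1) / sqrt (1 - \<beta>2)) / (1 - \<beta>1 / sqrt \<beta>2)"
  define K5 where "K5 = K0 + 1/3"
  have K0: "0 \<le> K0" using b1 b2 b12 by (simp add: K0_def s_def)
  have K5: "0 < K5" "1/3 \<le> K5" using K0 by (auto simp: K5_def)
  have "(\<lambda>n. of_nat n * s ^ n) \<longlonglongrightarrow> 0" using s by (intro powser_times_n_limit_0) simp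
  then have "eventually (\<lambda>n. of_nat n * s ^ n < 1 / (96 * K5)) sequentially"
    using K5 by (intro order_tendstoD(2)) auto
  then obtain N where N: "\<And>n. n \<ge> N \<Longrightarrow> of_nat n * s ^ n < 1 / (96 * K5)"
    by (auto simp: eventually_sequentially)
  define L where "L = Suc N"
  have L: "real L * s ^ L < 1 / (96 * K5)" "1 \<le> L" using N[of L] by (auto simp: L_def)
  define p where "p = 8 * s ^ L"
  define C where "C = 1 / (4 * s ^ L)"
  have sL: "0 < s ^ L" using s by simp
  have p0: "0 < p" using sL by (simp add: p_def)
  have small: "K5 * real L * p \<le> 1/12"
  proof -
    have "K5 * (real L * s ^ L) \<le> K5 * (1 / (96 * K5))" using L K5 by (intro mult_left_mono) auto
    then show ?thesis using K5 by (simp add: p_def field_simps)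
  qed
  have p1: "p \<le> 1/4"
  proof -
    have "K5 * 1 \<le> K5 * real L" using K5 L by (intro mult_left_mono) auto
    then have "1/3 \<le> K5 * real L" using K5 by linarith
    then have "1/3 * p \<le> K5 * real L * p"
      using p0 by (intro mult_right_mono) auto
    then show ?thesis using small by linarith
  qed
  have pC: "p * C = 2" using s by (simp add: p_def C_def)
  have C1: "1 \<le> C"
  proof -
    have "p * 1 \<le> p * C" using pC p1 by simp
    then show ?thesis using p0 by simp
  qed
  have sLC: "s ^ L * C = 1/4" using s by (simp add: C_def)
  have b1s: "\<beta>1 ^ L \<le> s ^ L" using b1 b12 by (intro power_mono) (auto simp: s_def)
  have h1: "\<beta>1 ^ L * C \<le> 1/4" using b1s C1 sLC by (metis mult_right_mono order.trans zero_le_one)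
  have h2: "\<beta>1 ^ L \<le> 1/4" using b1s sLC C1 p1 p_def by linarith
  have h3: "\<beta>2 ^ L * C\<^sup>2 \<le> 1"
  proof -
    have "\<beta>2 ^ L * C\<^sup>2 = (s ^ L * C)\<^sup>2" by (simp add: s2 power_mult_distrib power_mult[symmetric] mult.commute power_even_eq)
    then show ?thesis using sLC by (simp add: power2_eq_square)
  qed
  define D where "D = map_pmf (\<lambda>b. if b then C else -1) (bernoulli_pmf p)"
  have setD: "set_pmf D \<subseteq> {C, -1}" by (auto simp: D_def)
  have CD: "measure_pmf.prob D {C} \<le> p"
  proof -
    have "(\<lambda>b. if b then C else -1) -` {C} = {True}" using C1 by (auto split: if_splits)
    then have "measure_pmf.prob D {C} = measure_pmf.prob (bernoulli_pmf p) {True}"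
      by (simp only: D_def measure_map_pmf)
    then show ?thesis using p0 p1 by (simp add: measure_pmf_single)
  qed
  have ED: "measure_pmf.expectation D (\<lambda>c. c * x) = x * (1 + p)" for x
  proof -
    have "measure_pmf.expectation D (\<lambda>c. c * x) = (C * p + (p - 1)) * x"
      using p0 p1 by (simp add: D_def)
    also have "\<dots> = x * (p * C) + x * (p - 1)" by (simp add: algebra_simps)
    also have "\<dots> = x * (1 + p)" unfolding pC by (simp add: algebra_simps)
    finally show ?thesis .
  qed
  show ?thesis
  proof (rule exI[of _ "{0..1}"], rule exI[of _ D], rule exI[of _ 0], rule exI[of _ 0], intro conjI)
    show "compact {0..1::real}" by simp
    show "convex {0..1::real}" by simp
    show "(0::real) \<in> {0..1}" by simp
    show "(0::real) \<in> {0..1}" by simp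
    show "\<exists>G. \<forall>c\<in>set_pmf D. \<bar>c\<bar> \<le> G" using setD C1 by (intro exI[of _ C]) auto
    show "\<forall>x\<in>{0..1}. x \<noteq> 0 \<longrightarrow> measure_pmf.expectation D (\<lambda>c. c * 0) < measure_pmf.expectation D (\<lambda>c. c * x)"
      using p0 unfolding ED by (auto intro!: mult_pos_pos)
  next
    show "\<forall>\<alpha>>0. \<not> (AE \<omega> in stream_space (measure_pmf D).
              (\<lambda>t. adam_iter {0..1} 0 \<alpha> \<beta>1 \<beta>2 (\<lambda>t x. (\<omega> !! (t - 1)) * x) (Suc t)) \<longlonglongrightarrow> 0)"
    proof (intro allI impI)
    fix \<alpha> :: real assume \<alpha>: "0 < \<alpha>"
    define S where "S = stream_space (measure_pmf D)"
    interpret S: prob_space S unfolding S_def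
      by (rule prob_space.prob_space_stream_space[OF measure_pmf.prob_space_axioms])
    define Gf where "Gf = (\<lambda>n \<omega>. (\<Sum>k<n. (1/3 - K5 * (if RR L C \<omega> k then 1 else 0)) / sqrt (real (Suc k))))"
    define B where "B = {\<omega>. \<exists>M::nat. \<forall>n. Gf n \<omega> \<le> real M}"
    have Bs: "B \<in> sets S" and Bp: "measure S B < 1"
      using prob_part[OF CD less_imp_le[OF p0] K5(1) small] unfolding B_def Gf_def S_def by auto
    have vals: "AE \<omega> in S. \<forall>i. \<omega> !! i \<in> {C, -1}"
    proof -
      have "AE \<omega> in S. stream_all (\<lambda>x. x \<in> {C, -1}) \<omega>"
        unfolding S_def
        by (rule prob_space.AE_stream_all[OF measure_pmf.prob_space_axioms])
           (use setD in \<open>auto simp: AE_measure_pmf_iff\<close>)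
      then show ?thesis by (rule eventually_mono) (auto simp: sset_range)
    qed
    show "\<not> (AE \<omega> in stream_space (measure_pmf D).
              (\<lambda>t. adam_iter {0..1} 0 \<alpha> \<beta>1 \<beta>2 (\<lambda>t x. (\<omega> !! (t - 1)) * x) (Suc t)) \<longlonglongrightarrow> 0)"
    proof
      assume conv: "AE \<omega> in stream_space (measure_pmf D).
              (\<lambda>t. adam_iter {0..1} 0 \<alpha> \<beta>1 \<beta>2 (\<lambda>t x. (\<omega> !! (t - 1)) * x) (Suc t)) \<longlonglongrightarrow> 0"
      have "AE \<omega> in S. \<omega> \<in> B"
        using vals conv unfolding S_def
      proof (eventually_elim)
        case (elim \<omega>)
        have "\<exists>M::nat. \<forall>n. Gf n \<omega> \<le> real M"
          unfolding Gf_def K5_def K0_def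
          by (rule conv_consequence[OF b1 b2 b12 C1 _ h1 h2 h3 \<alpha> _ elim(2)]) (use elim(1) in auto)
        then show ?case by (simp add: B_def)
      qed
      then have "measure S B = 1" using S.AE_in_set_eq_1[OF Bs] by simp
      then show False using Bp by simp
    qed
    qed
  qed
qed

end
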